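(* There exist constants $C,K>0$ such that for all $x\in\mathbb Z_{\ge0}$, all integers $N\ge n\ge0$ and all $a\ge0$, $$\sum_{y\ge0}\mathfrak p^N_n(x,y)\,e^{ay}=\mathbf E^N_x[e^{aS_n}]\le C\,e^{ax+Ka^2n}.$$
   Context: Let $p_n(z)$ be the probability that simple symmetric random walk on $\mathbb Z$ started at $0$ is at $z$ at time $n$. For $x,y\in\mathbb Z_{\ge0}$ set $p^{(1/2)}_n(x,y)=p_n(x-y)-p_n(x+y+2)$, $\psi(x;n)=\sum_{y\ge0}p^{(1/2)}_n(x,y)$, and for $0\le n\le N$, $\mathfrak p^N_n(x,y)=p^{(1/2)}_n(x,y)\,\psi(y;N-n)/\psi(x;N)$. $\mathbf P^N_x$ is the uniform probability measure on paths $(s_0,\dots,s_N)\in\mathbb Z_{\ge0}^{N+1}$ with $s_0=x$ and $|s_{i+1}-s_i|=1$; $S$ is its coordinate process and $\mathbf E^N_x$ its expectation (so that $\mathbf P^N_x(S_n=y)=\mathfrak p^N_n(x,y)$). *)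

theory Defs
  imports "HOL-Probability.Probability"
begin

definition srw_p :: "nat \<Rightarrow> int \<Rightarrow> real" where
  "srw_p n z = (if \<bar>z\<bar> \<le> int n \<and> even (int n + z)
                then real (n choose nat ((int n + z) div 2)) / 2 ^ n else 0)"

text \<open>Killed (at -1) transition kernel p^(1/2)_n(x,y) = p_n(x-y) - p_n(x+y+2).\<close>
definition p_half :: "nat \<Rightarrow> nat \<Rightarrow> nat \<Rightarrow> real" where
  "p_half n x y = srw_p n (int x - int y) - srw_p n (int x + int y + 2)"

definition psi :: "nat \<Rightarrow> nat \<Rightarrow> real" where
  "psi x n = (\<Sum>y. p_half n x y)"

definition meander_p :: "nat \<Rightarrow> nat \<Rightarrow> nat \<Rightarrow> nat \<Rightarrow> real" where
  "meander_p N n x y = p_half n x y * psi y (N - n) / psi x N"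

definition paths :: "nat \<Rightarrow> nat \<Rightarrow> nat list set" where
  "paths N x = {s. length s = Suc N \<and> s ! 0 = x \<and>
                   (\<forall>i<N. \<bar>int (s ! Suc i) - int (s ! i)\<bar> = 1)}"

definition path_measure :: "nat \<Rightarrow> nat \<Rightarrow> nat list pmf" where
  "path_measure N x = pmf_of_set (paths N x)"

end

theory Submission
  imports Defs
begin


lemma srw_alt: "srw_p n z = (if even (int n + z) \<and> - int n \<le> z
     then real (n choose nat ((int n + z) div 2)) / 2^n else 0)"
proof (cases "even (int n + z) \<and> - int n \<le> z")
  case True
  show ?thesis
  proof (cases "z \<le> int n")
    case True then show ?thesis using \<open>even (int n + z) \<and> - int n \<le> z\<close>
      by (simp add: srw_p_def abs_le_iff)
  next
    case False
    obtain m where "int n + z = 2 * m" using \<open>even (int n + z) \<and> - int n \<le> z\<close> by (meson evenE)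
    then have "nat ((int n + z) div 2) > n" using False by simp
    then show ?thesis using False by (simp add: srw_p_def)
  qed
next
  case False then show ?thesis by (auto simp: srw_p_def)
qed

lemma srw_rec: "srw_p (Suc n) z = (srw_p n (z-1) + srw_p n (z+1)) / 2"
proof (cases "even (int n + 1 + z) \<and> - int n - 1 \<le> z")
  case True
  define k where "k = nat ((int n + 1 + z) div 2)"
  have kk: "int n + 1 + z = 2 * int k" using True unfolding k_def by (auto elim!: evenE)
  have e1: "srw_p (Suc n) z = real (Suc n choose k) / 2^(Suc n)"
    using True by (simp add: srw_alt k_def add.commute add.left_commute)
  have e3: "srw_p n (z+1) = real (n choose k) / 2^n"
  proof -
    have "(int n + (z+1)) div 2 = int k" using kk by (simp add: add.assoc)
    moreover have "even (int n + (z+1))" using kk by (simp add: add.assoc[symmetric] add.commute[of z])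
    moreover have "- int n \<le> z + 1" using True by linarith
    ultimately show ?thesis by (simp add: srw_alt)
  qed
  show ?thesis
  proof (cases k)
    case 0
    then have "z - 1 < - int n" using kk by simp
    then have "srw_p n (z-1) = 0" by (simp add: srw_alt)
    then show ?thesis using e1 e3 0 by simp
  next
    case (Suc j)
    have e2: "srw_p n (z-1) = real (n choose j) / 2^n"
    proof -
      have qq: "int n + (z-1) = 2 * int j" using kk Suc by simp
      have "(int n + (z-1)) div 2 = int j" using qq by simp
      moreover have "even (int n + (z-1))" using qq by simp
      moreover have "- int n \<le> z - 1" using kk Suc by simp
      ultimately show ?thesis by (simp add: srw_alt)
    qed
    have "real (Suc n choose k) = real (n choose j) + real (n choose k)" using Suc by simp
    then have "srw_p (Suc n) z = (real (n choose j) + real (n choose k)) / 2 ^ Suc n" using e1 by simp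
    also have "\<dots> = (real (n choose j) / 2^n + real (n choose k) / 2^n) / 2"
      by (simp add: field_simps)
    finally show ?thesis using e2 e3 by simp
  qed
next
  case False
  then have "srw_p (Suc n) z = 0" by (auto simp: srw_alt add.commute add.left_commute)
  moreover have "srw_p n (z-1) = 0" using False by (auto simp: srw_alt)
  moreover have "srw_p n (z+1) = 0" using False by (auto simp: srw_alt)
  ultimately show ?thesis by simp
qed

lemma srw_0: "srw_p 0 z = (if z = 0 then 1 else 0)"
  by (auto simp: srw_p_def)

lemma srw_supp: "int n < \<bar>z\<bar> \<Longrightarrow> srw_p n z = 0"
  by (auto simp: srw_p_def)

lemma srw_nonneg: "srw_p n z \<ge> 0"
  by (auto simp: srw_p_def)

lemma srw_sym: "srw_p n (-z) = srw_p n z"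
proof (induction n arbitrary: z)
  case 0 then show ?case by (simp add: srw_0)
next
  case (Suc n)
  have "srw_p (Suc n) (-z) = (srw_p n (-z-1) + srw_p n (-z+1)) / 2"
    by (rule srw_rec)
  also have "\<dots> = (srw_p n (z+1) + srw_p n (z-1)) / 2"
    using Suc.IH[of "z+1"] Suc.IH[of "z-1"] by simp
  also have "\<dots> = srw_p (Suc n) z" using Suc by (simp add: srw_rec)
  finally show ?case .
qed

lemma srw_U: "-1 \<le> j \<Longrightarrow> srw_p n (j+2) \<le> srw_p n j"
proof (induction n arbitrary: j)
  case 0 then show ?case by (simp add: srw_0)
next
  case (Suc n)
  show ?case
  proof (cases "j = -1")
    case True
    then show ?thesis using srw_sym[of "Suc n" 1] by simp
  next
    case False
    have a: "srw_p n (j+3) \<le> srw_p n (j+1)" using Suc.IH[of "j+1"] Suc.prems by (simp add: add.assoc)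
    have b: "srw_p n (j+1) \<le> srw_p n (j-1)" using Suc.IH[of "j-1"] Suc.prems False by (simp add: add.commute)
    have "srw_p (Suc n) (j+2) = (srw_p n (j+1) + srw_p n (j+3)) / 2"
      by (simp add: srw_rec algebra_simps)
    also have "\<dots> \<le> (srw_p n (j-1) + srw_p n (j+1)) / 2" using a b by simp
    also have "\<dots> = srw_p (Suc n) j" by (simp add: srw_rec)
    finally show ?thesis .
  qed
qed

lemma srw_dec_aux: "0 \<le> j \<Longrightarrow> srw_p n (j + 2 * int t) \<le> srw_p n j"
proof (induction t)
  case 0 then show ?case by simp
next
  case (Suc t)
  have "srw_p n (j + 2 * int (Suc t)) = srw_p n ((j + 2 * int t) + 2)" by (simp add: algebra_simps)
  also have "\<dots> \<le> srw_p n (j + 2 * int t)" by (rule srw_U) (use Suc in simp)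
  finally show ?case using Suc by simp
qed

definition EE :: "nat \<Rightarrow> (int \<Rightarrow> real) \<Rightarrow> real" where
  "EE n f = (\<Sum>z\<in>{-int n..int n}. srw_p n z * f z)"

lemma EE_ext: assumes "{-int n..int n} \<subseteq> S" "finite S"
  shows "EE n f = (\<Sum>z\<in>S. srw_p n z * f z)"
  unfolding EE_def
  by (rule sum.mono_neutral_left) (use assms in \<open>auto simp: srw_supp\<close>)

lemma sum_shift_int: "(\<Sum>z\<in>{a..b::int}. g z) = (\<Sum>w\<in>{a-c..b-c}. g (w+c))"
  by (rule sum.reindex_bij_witness[of _ "\<lambda>w. w + c" "\<lambda>z. z - c"]) auto

lemma sum_neg_int: "(\<Sum>z\<in>{-a..a::int}. g z) = (\<Sum>w\<in>{-a..a}. g (-w))"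
  by (rule sum.reindex_bij_witness[of _ "\<lambda>z. - z" "\<lambda>w. - w"]) auto

lemma EE_rec: "EE (Suc n) f = EE n (\<lambda>z. (f (z+1) + f (z-1)) / 2)"
proof -
  let ?I = "{-int n - 2..int n + 2}"
  have "EE (Suc n) f = (\<Sum>z\<in>?I. srw_p (Suc n) z * f z)"
    by (rule EE_ext) auto
  also have "\<dots> = (\<Sum>z\<in>?I. srw_p n (z-1) * f z) / 2 + (\<Sum>z\<in>?I. srw_p n (z+1) * f z) / 2"
    unfolding srw_rec sum_divide_distrib sum.distrib[symmetric] by (rule sum.cong) (simp_all add: field_simps)
  also have "(\<Sum>z\<in>?I. srw_p n (z-1) * f z) = (\<Sum>w\<in>{-int n - 3..int n + 1}. srw_p n w * f (w+1))"
    by (subst sum_shift_int[of _ _ _ 1]) (simp add: algebra_simps)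
  also have "\<dots> = EE n (\<lambda>w. f (w+1))" by (rule EE_ext[symmetric]) auto
  also have "(\<Sum>z\<in>?I. srw_p n (z+1) * f z) = (\<Sum>w\<in>{- 1 - int n..int n + 3}. srw_p n w * f (w-1))"
    by (subst sum_shift_int[of _ _ _ "-1"]) (simp add: algebra_simps)
  also have "\<dots> = EE n (\<lambda>w. f (w-1))" by (rule EE_ext[symmetric]) auto
  finally have "EE (Suc n) f = EE n (\<lambda>w. f (w+1)) / 2 + EE n (\<lambda>w. f (w-1)) / 2" by simp
  also have "\<dots> = EE n (\<lambda>z. (f (z+1) + f (z-1)) / 2)"
    unfolding EE_def sum_divide_distrib sum.distrib[symmetric] by (rule sum.cong) (simp_all add: field_simps)
  finally show ?thesis .
qed

lemma EE_sym: "EE n f = EE n (\<lambda>z. f (-z))"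
  unfolding EE_def by (subst sum_neg_int) (simp add: srw_sym)

lemma EE_add: "EE n (\<lambda>z. f z + g z) = EE n f + EE n g"
  unfolding EE_def by (simp add: algebra_simps sum.distrib)

lemma EE_cmult: "EE n (\<lambda>z. c * f z) = c * EE n f"
  unfolding EE_def by (simp add: algebra_simps sum_distrib_left)

lemma EE_mono: "(\<And>z. f z \<le> g z) \<Longrightarrow> EE n f \<le> EE n g"
  unfolding EE_def by (intro sum_mono mult_left_mono) (auto simp: srw_nonneg)

lemma EE_exp: "EE n (\<lambda>z. exp (b * of_int z)) = cosh b ^ n"
proof (induction n)
  case 0 then show ?case by (simp add: EE_def srw_0)
next
  case (Suc n)
  have "EE (Suc n) (\<lambda>z. exp (b * of_int z)) = EE n (\<lambda>z. cosh b * exp (b * of_int z))"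
    unfolding EE_rec
    by (rule arg_cong[where f="EE n"]) (auto simp: cosh_field_def algebra_simps exp_add exp_diff exp_minus field_simps)
  then show ?case using Suc by (simp add: EE_cmult)
qed

lemma cosh_le: "cosh (b::real) \<le> exp (b^2/2)"
proof -
  have "ln (cosh \<bar>b\<bar>) \<le> \<bar>b\<bar>^2/2"
  proof -
    have h: "- (2*\<bar>b\<bar>) * (1/2) + ln (1 + (1/2) * (exp (2*\<bar>b\<bar>) - 1)) \<le> (2*\<bar>b\<bar>)^2 / 8"
      by (rule Hoeffdings_lemma_aux) auto
    have ee: "exp (2*\<bar>b\<bar>) = exp \<bar>b\<bar> * exp \<bar>b\<bar>" by (simp add: exp_add[symmetric])
    have "1 + (1/2) * (exp (2*\<bar>b\<bar>) - 1) = exp \<bar>b\<bar> * cosh \<bar>b\<bar>"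
      unfolding ee by (simp add: cosh_field_def field_simps exp_minus mult_exp_exp[symmetric])
    then have "ln (1 + (1/2) * (exp (2*\<bar>b\<bar>) - 1)) = \<bar>b\<bar> + ln (cosh \<bar>b\<bar>)"
      by (simp add: ln_mult)
    then show ?thesis using h by (simp add: power2_eq_square)
  qed
  then have "cosh \<bar>b\<bar> \<le> exp (\<bar>b\<bar>^2/2)"
    by (metis cosh_real_pos exp_le_cancel_iff exp_ln)
  then show ?thesis by simp
qed

lemma EE_abs_exp: assumes "b \<ge> 0" shows "EE n (\<lambda>z. exp (b * \<bar>of_int z\<bar>)) \<le> 2 * exp (b^2/2 * n)"
proof -
  have "EE n (\<lambda>z. exp (b * \<bar>of_int z\<bar>)) \<le> EE n (\<lambda>z. exp (b * of_int z) + exp ((-b) * of_int z))"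
    by (rule EE_mono) (auto simp: abs_if)
  also have "\<dots> = 2 * cosh b ^ n" using EE_exp[of n b] EE_exp[of n "-b"] by (simp add: EE_add)
  also have "\<dots> \<le> 2 * exp (b^2/2) ^ n"
    by (intro mult_left_mono power_mono cosh_le) auto
  also have "\<dots> = 2 * exp (b^2/2 * n)" by (simp add: exp_of_nat_mult[symmetric] mult.commute)
  finally show ?thesis .
qed

definition ph :: "nat \<Rightarrow> int \<Rightarrow> int \<Rightarrow> real" where
  "ph n x y = srw_p n (x - y) - srw_p n (x + y + 2)"

lemma p_half_ph: "p_half n x y = ph n (int x) (int y)"
  by (simp add: p_half_def ph_def)

lemma ph_rec: "ph (Suc n) x y = (ph n (x+1) y + ph n (x-1) y) / 2"
  unfolding ph_def srw_rec by (simp add: algebra_simps diff_divide_distrib)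

lemma ph_m1: "ph n (-1) y = 0"
  unfolding ph_def using srw_sym[of n "y+1"] by (simp add: algebra_simps)

lemma ph_0: "0 \<le> x \<Longrightarrow> 0 \<le> y \<Longrightarrow> ph 0 x y = (if x = y then 1 else 0)"
  by (simp add: ph_def srw_0)

lemma ph_supp: "0 \<le> y \<Longrightarrow> -1 \<le> x \<Longrightarrow> y > x + int n \<Longrightarrow> ph n x y = 0"
  by (simp add: ph_def srw_supp)

lemma ph_nonneg: assumes "0 \<le> x" "0 \<le> y" shows "ph n x y \<ge> 0"
proof -
  have "srw_p n (\<bar>x - y\<bar> + 2 * int (nat (min x y + 1))) \<le> srw_p n \<bar>x - y\<bar>"
    by (rule srw_dec_aux) simp
  moreover have "\<bar>x - y\<bar> + 2 * int (nat (min x y + 1)) = x + y + 2" using assms by (simp add: abs_if min_def)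
  moreover have "srw_p n \<bar>x - y\<bar> = srw_p n (x - y)" by (metis abs_of_nonneg abs_of_nonpos linorder_le_cases srw_sym minus_minus)
  ultimately show ?thesis by (simp add: ph_def)
qed

definition KK :: "nat \<Rightarrow> int \<Rightarrow> (nat \<Rightarrow> real) \<Rightarrow> real" where
  "KK n x h = (\<Sum>y<nat x + n + 1. ph n x (int y) * h y)"

lemma KK_ext: assumes "nat x + n + 1 \<le> B" "-1 \<le> x"
  shows "KK n x h = (\<Sum>y<B. ph n x (int y) * h y)"
  unfolding KK_def
  by (rule sum.mono_neutral_left) (use assms in \<open>auto simp: ph_supp\<close>)

lemma KK_m1: "KK n (-1) h = 0"
  by (simp add: KK_def ph_m1)

lemma KK_0: "0 \<le> x \<Longrightarrow> KK 0 x h = h (nat x)"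
proof -
  assume x: "0 \<le> x"
  have "KK 0 x h = (\<Sum>y<nat x + 1. (if y = nat x then h y else 0))"
    unfolding KK_def using x by (intro sum.cong) (auto simp: ph_0)
  also have "\<dots> = h (nat x)" using x by (simp add: sum.delta'[where a = "nat x"] cong: if_cong)
  finally show ?thesis .
qed

lemma KK_rec: assumes "0 \<le> x" shows "KK (Suc n) x h = (KK n (x+1) h + KK n (x-1) h) / 2"
proof -
  define B where "B = nat x + n + 2"
  have "KK (Suc n) x h = (\<Sum>y<B. ph (Suc n) x (int y) * h y)"
    by (rule KK_ext) (use assms in \<open>auto simp: B_def\<close>)
  moreover have "KK n (x+1) h = (\<Sum>y<B. ph n (x+1) (int y) * h y)"
    by (rule KK_ext) (use assms in \<open>auto simp: B_def\<close>)
  moreover have "KK n (x-1) h = (\<Sum>y<B. ph n (x-1) (int y) * h y)"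
    by (rule KK_ext) (use assms in \<open>auto simp: B_def\<close>)
  moreover have "(\<Sum>y<B. ph (Suc n) x (int y) * h y) = ((\<Sum>y<B. ph n (x+1) (int y) * h y) + (\<Sum>y<B. ph n (x-1) (int y) * h y))/2"
    unfolding sum_divide_distrib sum.distrib[symmetric] by (rule sum.cong) (simp_all add: ph_rec field_simps)
  ultimately show ?thesis by simp
qed

lemma KK_unique:
  assumes rec: "\<And>n x. 0 \<le> x \<Longrightarrow> G (Suc n) x = (G n (x+1) + G n (x-1)) / 2"
      and m1: "\<And>n. G n (-1) = 0"
      and b0: "\<And>x. 0 \<le> x \<Longrightarrow> G 0 x = h (nat x)"
  shows "-1 \<le> x \<Longrightarrow> KK n x h = G n x"
proof (induction n arbitrary: x)
  case 0
  then show ?case by (cases "x = -1") (auto simp: KK_m1 m1 KK_0 b0)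
next
  case (Suc n)
  show ?case
  proof (cases "x = -1")
    case True then show ?thesis by (simp add: KK_m1 m1)
  next
    case False
    then have "0 \<le> x" using Suc.prems by simp
    then show ?thesis using Suc.IH[of "x+1"] Suc.IH[of "x-1"] by (simp add: KK_rec rec)
  qed
qed

lemma KK_harm: "-1 \<le> x \<Longrightarrow> KK n x (\<lambda>y. real y + 1) = real_of_int x + 1"
  by (rule KK_unique) (auto simp: field_simps)

lemma KK_nonneg_mono: assumes "0 \<le> x" "\<And>y. h y \<le> h' y" shows "KK n x h \<le> KK n x h'"
  unfolding KK_def by (intro sum_mono mult_left_mono) (use assms in \<open>auto simp: ph_nonneg\<close>)

definition qq :: "nat \<Rightarrow> int \<Rightarrow> real" where
  "qq m i = srw_p m i + srw_p m (i+1)"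

definition Gs :: "nat \<Rightarrow> int \<Rightarrow> real" where
  "Gs m y = (\<Sum>i<nat (y+1). qq m (int i))"

lemma nat_int_p1[simp]: "nat (int k + 1) = Suc k" by simp

lemma nat_1_int[simp]: "nat (1 + int k) = Suc k" by simp

lemma qq_nonneg: "qq m i \<ge> 0" by (simp add: qq_def srw_nonneg)

lemma qq_rec: "qq (Suc m) i = (qq m (i-1) + qq m (i+1)) / 2"
  unfolding qq_def srw_rec by (simp add: algebra_simps add_divide_distrib)

lemma qq_m1: "qq m (-1) = qq m 0"
  unfolding qq_def using srw_sym[of m 1] by simp

lemma qq_pos: "qq m 0 > 0"
proof (induction m)
  case 0 then show ?case by (simp add: qq_def srw_0)
next
  case (Suc m)
  have "qq (Suc m) 0 = srw_p m 1 + (srw_p m 0 + srw_p m 2) / 2"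
    unfolding qq_def srw_rec using srw_sym[of m 1] by simp
  moreover have "srw_p m 2 \<ge> 0" by (rule srw_nonneg)
  moreover have "srw_p m 0 + srw_p m 1 > 0" using Suc by (simp add: qq_def)
  moreover have "srw_p m 1 \<ge> 0" by (rule srw_nonneg)
  ultimately have "srw_p m 1 + (srw_p m 0 + srw_p m 2) / 2 > 0" by argo
  then show ?case using \<open>qq (Suc m) 0 = _\<close> by simp
qed

lemma qq_dec: "0 \<le> i \<Longrightarrow> qq m (i+1) \<le> qq m i"
  unfolding qq_def using srw_U[of i m] by (simp add: add.assoc)

lemma qq_antimono: "i \<le> j \<Longrightarrow> qq m (int j) \<le> qq m (int i)"
proof (induction j)
  case 0 then show ?case by simp
next
  case (Suc j)
  show ?case
  proof (cases "i = Suc j")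
    case True then show ?thesis by simp
  next
    case False
    then have "qq m (int j) \<le> qq m (int i)" using Suc by simp
    moreover have "qq m (int (Suc j)) \<le> qq m (int j)" using qq_dec[of "int j" m] by (simp add: add.commute)
    ultimately show ?thesis by simp
  qed
qed

lemma Gs_m1: "Gs m (-1) = 0" by (simp add: Gs_def)

lemma Gs_0: "0 \<le> y \<Longrightarrow> Gs 0 y = 1"
  unfolding Gs_def by (simp add: sum.lessThan_Suc_shift Suc_nat_eq_nat_zadd1[symmetric] qq_def srw_0 del: sum.lessThan_Suc)

lemma Gs_nat: "Gs m (int y) = (\<Sum>i<Suc y. qq m (int i))"
  by (simp add: Gs_def)

lemma Gs_rec: assumes "0 \<le> y" shows "Gs (Suc m) y = (Gs m (y+1) + Gs m (y-1)) / 2"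
proof -
  obtain k where k: "y = int k" using assms by (metis nonneg_eq_int)
  have A: "(\<Sum>i<Suc k. qq m (int i + 1)) = Gs m (y+1) - qq m 0"
  proof -
    have "Gs m (y+1) = (\<Sum>i<Suc (Suc k). qq m (int i))" using k by (simp add: Gs_def nat_add_distrib)
    also have "\<dots> = qq m 0 + (\<Sum>i<Suc k. qq m (int i + 1))"
      by (subst sum.lessThan_Suc_shift) (simp add: add.commute)
    finally show ?thesis by simp
  qed
  have B: "(\<Sum>i<Suc k. qq m (int i - 1)) = qq m 0 + Gs m (y-1)"
  proof -
    have "(\<Sum>i<Suc k. qq m (int i - 1)) = qq m (-1) + (\<Sum>i<k. qq m (int i))"
      by (subst sum.lessThan_Suc_shift) simp
    moreover have "Gs m (y-1) = (\<Sum>i<k. qq m (int i))" using k by (simp add: Gs_def)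
    ultimately show ?thesis by (simp add: qq_m1)
  qed
  have "Gs (Suc m) y = (\<Sum>i<Suc k. qq m (int i - 1)) / 2 + (\<Sum>i<Suc k. qq m (int i + 1)) / 2"
    unfolding sum_divide_distrib sum.distrib[symmetric] using k by (simp add: Gs_def qq_rec add_divide_distrib)
  then show ?thesis using A B by argo
qed

lemma KK_Gs: "-1 \<le> y \<Longrightarrow> KK m y (\<lambda>_. 1) = Gs m y"
  by (rule KK_unique) (auto simp: Gs_rec Gs_m1 Gs_0)

lemma psi_K: "psi y m = KK m (int y) (\<lambda>_. 1)"
proof -
  have "psi y m = (\<Sum>i\<in>{..<y + m + 1}. p_half m y i)"
    unfolding psi_def by (rule suminf_finite) (auto simp: p_half_ph intro!: ph_supp)
  then show ?thesis by (simp add: KK_def p_half_ph)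
qed

lemma psi_Gs: "psi y m = Gs m (int y)"
  by (simp add: psi_K KK_Gs)

lemma psi_pos: "psi y m > 0"
proof -
  have "psi y m = (\<Sum>i<Suc y. qq m (int i))" by (simp add: psi_Gs Gs_nat)
  also have "\<dots> \<ge> qq m (int 0)" 
    by (rule member_le_sum) (auto simp: qq_nonneg)
  finally show ?thesis using qq_pos[of m] by simp
qed

lemma psi_L: "(real y + 1) * psi (Suc y) m \<le> (real y + 2) * psi y m"
proof -
  have s: "psi (Suc y) m = psi y m + qq m (int y + 1)"
    unfolding psi_Gs Gs_nat by (simp add: add.commute)
  have "real (card {..<Suc y}) * qq m (int y + 1) \<le> (\<Sum>i<Suc y. qq m (int i))"
    by (rule sum_bounded_below) (use qq_antimono[of _ "Suc y" m] in \<open>auto simp: add.commute\<close>)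
  then have h: "(1 + real y) * qq m (int y + 1) \<le> psi y m" by (simp add: psi_Gs Gs_nat)
  have "(real y + 1) * psi (Suc y) m = (real y + 1) * psi y m + (1 + real y) * qq m (int y + 1)"
    by (simp add: s algebra_simps)
  also have "\<dots> \<le> (real y + 1) * psi y m + psi y m" using h by simp
  also have "\<dots> = (real y + 2) * psi y m" by (simp add: algebra_simps)
  finally show ?thesis .
qed



definition gg :: "real \<Rightarrow> real \<Rightarrow> real" where "gg a u = u * exp (a * \<bar>u\<bar>)"

lemma gbound_pos:
  assumes c: "c > 0" and a: "a \<ge> 0" and z: "z \<ge> 0"
  shows "gg a (c+z) + gg a (c-z) \<le> 4*c*exp(a*c)*exp(2*a*z)"
proof (cases "z \<le> c")
  case True
  have e1: "exp (a*(c+z)) = exp (a*c) * exp (a*z)" by (simp add: distrib_left exp_add)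
  have ez: "1 \<le> exp (a*z)" using a z by simp
  have ez2: "exp (a*z) \<le> exp (2*a*z)" using a z by simp
  have "gg a (c+z) = (c+z) * (exp (a*c) * exp (a*z))" using c z by (simp add: gg_def e1)
  also have "\<dots> \<le> (2*c) * (exp (a*c) * exp (a*z))" using True by (intro mult_right_mono) auto
  finally have A: "gg a (c+z) \<le> 2*c*exp (a*c)*exp (a*z)" by simp
  have "gg a (c-z) = (c-z) * exp (a*(c-z))" using True by (simp add: gg_def)
  also have "\<dots> \<le> c * exp (a*c)" using True a z c by (intro mult_mono) (auto simp: mult_left_mono)
  also have "\<dots> = (c*exp(a*c)) * 1" by simp
  also have "\<dots> \<le> (c*exp(a*c))*(2*exp(a*z))" 
    using ez c by (intro mult_left_mono) (linarith, simp)
  also have "\<dots> = 2*c*exp (a*c)*exp (a*z)" by simp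
  finally have B: "gg a (c-z) \<le> 2*c*exp (a*c)*exp (a*z)" .
  have "gg a (c+z) + gg a (c-z) \<le> 4*c*exp(a*c)*exp(a*z)" using A B by simp
  also have "\<dots> \<le> 4*c*exp(a*c)*exp(2*a*z)" using ez2 c by (simp add: mult_left_mono)
  finally show ?thesis .
next
  case False
  define E1 where "E1 = exp (a*c)"
  define Em where "Em = exp (-(a*c))"
  define Ez where "Ez = exp (a*z)"
  have pos: "E1 > 0" "Em > 0" "Ez > 0" by (simp_all add: E1_def Em_def Ez_def)
  have "gg a (c+z) = (c+z) * (E1 * Ez)" using c z by (simp add: gg_def E1_def Ez_def distrib_left exp_add)
  moreover have "gg a (c-z) = (c-z) * (Ez * Em)"
  proof -
    have "\<bar>c-z\<bar> = z - c" using False by simp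
    moreover have "exp (a*(z-c)) = Ez*Em" by (simp add: Ez_def Em_def exp_add[symmetric] algebra_simps)
    ultimately show ?thesis by (simp add: gg_def)
  qed
  ultimately have S: "gg a (c+z) + gg a (c-z) = Ez * (c*E1 + c*Em + z*(E1 - Em))" by (simp add: algebra_simps)
  have "1 - exp (-(2*a*c)) \<le> 2*a*c" using exp_ge_add_one_self[of "-(2*a*c)"] by simp
  moreover have "E1 - Em = E1 * (1 - exp (-(2*a*c)))"
    by (simp add: E1_def Em_def algebra_simps exp_add[symmetric])
  ultimately have "E1 - Em \<le> E1 * (2*a*c)" using pos by (simp add: mult_left_mono)
  then have "z*(E1 - Em) \<le> z * (E1 * (2*a*c))" using z by (simp add: mult_left_mono)
  also have "\<dots> = 2*c*E1 * (a*z)" by (simp add: algebra_simps)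
  also have "\<dots> \<le> 2*c*E1 * Ez"
  proof -
    have "a*z \<le> Ez" using exp_ge_add_one_self[of "a*z"] unfolding Ez_def by linarith
    then show ?thesis using c pos by (intro mult_left_mono) auto
  qed
  finally have Z: "z*(E1 - Em) \<le> 2*c*E1*Ez" .
  have M: "c*Em \<le> c*E1" using c a unfolding E1_def Em_def by (intro mult_left_mono) auto
  have ez: "1 \<le> Ez" using a z unfolding Ez_def by simp
  have "c*E1 + c*Em + z*(E1 - Em) \<le> 2*c*E1 + 2*c*E1*Ez" using Z M by linarith
  also have "\<dots> \<le> 4*c*E1*Ez" using ez c pos by (simp add: mult_left_mono)
  finally have "gg a (c+z) + gg a (c-z) \<le> Ez * (4*c*E1*Ez)" unfolding S using pos by (simp add: mult_left_mono)
  also have "\<dots> = 4*c*exp(a*c)*exp(2*a*z)" by (simp add: E1_def Ez_def exp_add[symmetric] algebra_simps)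
  finally show ?thesis .
qed

lemma gbound:
  assumes c: "c > 0" and a: "a \<ge> 0"
  shows "gg a (c+z) + gg a (c-z) \<le> 4*c*exp(a*c)*exp(2*a*\<bar>z\<bar>)"
proof (cases "z \<ge> 0")
  case True then show ?thesis using gbound_pos[OF c a True] by simp
next
  case False then show ?thesis using gbound_pos[OF c a, of "-z"] by (simp add: add.commute)
qed

lemma gg_odd: "gg a (-u) = - gg a u" by (simp add: gg_def)

definition Tb :: "real \<Rightarrow> nat \<Rightarrow> int \<Rightarrow> real" where
  "Tb a n c = EE n (\<lambda>z. gg a (of_int (c + z)))"

lemma EE_avg: "EE n (\<lambda>z. (f z + g z) / 2) = (EE n f + EE n g) / 2"
  using EE_add[of n "\<lambda>z. f z / 2" "\<lambda>z. g z / 2"] EE_cmult[of n "1/2" f] EE_cmult[of n "1/2" g]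
  by (simp add: add_divide_distrib)

lemma EE_0: "EE 0 f = f 0" by (simp add: EE_def srw_0)

lemma Tb_rec: "Tb a (Suc n) c = (Tb a n (c+1) + Tb a n (c-1)) / 2"
  unfolding Tb_def EE_rec EE_avg[symmetric] by (simp add: algebra_simps)

lemma Tb_0: "Tb a n 0 = 0"
proof -
  have "Tb a n 0 = EE n (\<lambda>z. gg a (of_int (- z)))" unfolding Tb_def by (subst EE_sym) simp
  also have "\<dots> = - Tb a n 0" unfolding Tb_def using EE_cmult[of n "-1" "\<lambda>z. gg a (of_int z)"]
    by (simp add: gg_odd)
  finally show ?thesis by simp
qed

lemma Bes_eq: assumes "-1 \<le> x"
  shows "KK n x (\<lambda>y. (real y + 1) * exp (a * real y)) = exp (-a) * Tb a n (x+1)"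
proof (rule KK_unique[OF _ _ _ assms])
  fix n and x :: int assume "0 \<le> x"
  show "exp (-a) * Tb a (Suc n) (x+1) = (exp (-a) * Tb a n (x+1+1) + exp (-a) * Tb a n (x-1+1)) / 2"
    by (simp add: Tb_rec algebra_simps add_divide_distrib)
next
  fix n show "exp (-a) * Tb a n (-1+1) = 0" by (simp add: Tb_0)
next
  fix x :: int assume x: "0 \<le> x"
  have "exp (- a) * Tb a 0 (x + 1) = exp (-a) * ((real_of_int x + 1) * exp (a * (real_of_int x + 1)))"
    using x by (simp add: Tb_def EE_0 gg_def)
  also have "\<dots> = (real (nat x) + 1) * exp (a * real (nat x))"
    using x by (simp add: algebra_simps exp_add[symmetric])
  finally show "exp (- a) * Tb a 0 (x + 1) = (real (nat x) + 1) * exp (a * real (nat x))" .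
qed

lemma Tb_bound: assumes a: "a \<ge> 0" and c: "c \<ge> 1"
  shows "Tb a n c \<le> 4 * real_of_int c * exp (a * real_of_int c) * exp (2 * a^2 * n)"
proof -
  have "Tb a n c = EE n (\<lambda>z. gg a (of_int (c + - z)))" unfolding Tb_def by (subst EE_sym) simp
  then have "Tb a n c = (Tb a n c + EE n (\<lambda>z. gg a (of_int (c + - z)))) / 2" by simp
  also have "\<dots> = EE n (\<lambda>z. (gg a (of_int c + of_int z) + gg a (of_int c - of_int z)) / 2)"
    unfolding Tb_def EE_avg by simp
  also have "\<dots> \<le> EE n (\<lambda>z. (2 * c * exp (a * c)) * exp ((2*a) * \<bar>of_int z\<bar>))"
    by (rule EE_mono) (use gbound[of "of_int c" a] a c in \<open>auto simp: algebra_simps\<close>)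
  also have "\<dots> = (2 * c * exp (a * c)) * EE n (\<lambda>z. exp ((2*a) * \<bar>of_int z\<bar>))"
    by (rule EE_cmult)
  also have "\<dots> \<le> (2 * c * exp (a * c)) * (2 * exp ((2*a)^2/2 * n))"
    by (rule mult_left_mono[OF EE_abs_exp]) (use a c in auto)
  also have "\<dots> = 4 * real_of_int c * exp (a * real_of_int c) * exp (2 * a^2 * n)"
    by (simp add: power2_eq_square algebra_simps)
  finally show ?thesis .
qed

lemma Bes_bound: assumes a: "a \<ge> 0" and x: "0 \<le> x"
  shows "KK n x (\<lambda>y. (real y + 1) * exp (a * real y)) \<le> 4 * (real_of_int x + 1) * exp (a * real_of_int x) * exp (2 * a^2 * n)"
proof -
  have "KK n x (\<lambda>y. (real y + 1) * exp (a * real y)) = exp (-a) * Tb a n (x+1)" using x by (simp add: Bes_eq)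
  also have "\<dots> \<le> exp (-a) * (4 * (real_of_int x+1) * exp (a * (real_of_int x+1)) * exp (2 * a^2 * n))"
    using Tb_bound[OF a, of "x+1" n] x by (intro mult_left_mono) auto
  also have "\<dots> = 4 * (real_of_int x+1) * (exp (-a) * exp (a * (real_of_int x+1))) * exp (2 * a^2 * n)"
    by (simp add: algebra_simps)
  also have "exp (-a) * exp (a * (real_of_int x+1)) = exp (a * real_of_int x)"
    by (simp add: exp_add[symmetric] algebra_simps)
  finally show ?thesis .
qed



lemma paths_0: "paths 0 x = {[x]}"
  by (auto simp: paths_def length_Suc_conv)

lemma Cons_paths: "x # t \<in> paths (Suc N) x \<longleftrightarrow> t \<in> paths N (t!0) \<and> \<bar>int (t!0) - int x\<bar> = 1"
  unfolding paths_def by (auto simp: All_less_Suc2)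

lemma paths_hd: "s \<in> paths (Suc N) x \<Longrightarrow> \<exists>t. s = x # t"
  unfolding paths_def by (cases s) auto

lemma step_iff: "\<bar>int y - int x\<bar> = 1 \<longleftrightarrow> y = Suc x \<or> (x \<noteq> 0 \<and> y = x - 1)"
  by auto

lemma paths_Suc: "paths (Suc N) x = Cons x ` (paths N (Suc x) \<union> (if x = 0 then {} else paths N (x - 1)))"
proof (intro equalityI subsetI)
  fix s assume s: "s \<in> paths (Suc N) x"
  then obtain t where t: "s = x # t" using paths_hd by blast
  then have "t \<in> paths N (t!0)" "\<bar>int (t!0) - int x\<bar> = 1" using s Cons_paths by auto
  then show "s \<in> Cons x ` (paths N (Suc x) \<union> (if x = 0 then {} else paths N (x - 1)))"
    using t unfolding step_iff by auto
next
  fix s assume "s \<in> Cons x ` (paths N (Suc x) \<union> (if x = 0 then {} else paths N (x - 1)))"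
  then obtain t where t: "s = x # t" and m: "t \<in> paths N (Suc x) \<or> (x \<noteq> 0 \<and> t \<in> paths N (x - 1))"
    by (auto split: if_splits)
  have h: "t ! 0 = Suc x \<or> (x \<noteq> 0 \<and> t ! 0 = x - 1)" using m by (auto simp: paths_def)
  have "t \<in> paths N (t!0)" using m by (auto simp: paths_def)
  then show "s \<in> paths (Suc N) x" using t h Cons_paths step_iff by metis
qed

lemma paths_disj: "a \<noteq> b \<Longrightarrow> paths N a \<inter> paths N b = {}"
  by (auto simp: paths_def)

lemma finite_paths: "finite (paths N x)"
  by (induction N arbitrary: x) (auto simp: paths_0 paths_Suc)

lemma paths_ne: "paths N x \<noteq> {}"
  by (induction N arbitrary: x) (auto simp: paths_0 paths_Suc)

lemma sum_paths_Suc: "(\<Sum>s\<in>paths (Suc N) x. f s) =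
   (\<Sum>t\<in>paths N (Suc x). f (x # t)) + (if x = 0 then 0 else (\<Sum>t\<in>paths N (x - 1). f (x # t)))"
proof -
  have "(\<Sum>s\<in>paths (Suc N) x. f s) = (\<Sum>t\<in>paths N (Suc x) \<union> (if x = 0 then {} else paths N (x - 1)). f (x # t))"
    unfolding paths_Suc by (subst sum.reindex) (auto simp: inj_on_def)
  also have "\<dots> = (\<Sum>t\<in>paths N (Suc x). f (x # t)) + (\<Sum>t\<in>(if x = 0 then {} else paths N (x - 1)). f (x # t))"
    by (rule sum.union_disjoint) (use paths_disj[of "Suc x" "x-1" N] in \<open>auto simp: finite_paths\<close>)
  finally show ?thesis by simp
qed

lemma psi_rec: "psi x (Suc N) = (psi (Suc x) N + (if x = 0 then 0 else psi (x - 1) N)) / 2"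
proof -
  have "psi x (Suc N) = (KK N (int x + 1) (\<lambda>_. 1) + KK N (int x - 1) (\<lambda>_. 1)) / 2"
    by (simp add: psi_K KK_rec)
  moreover have "KK N (int x - 1) (\<lambda>_. 1) = (if x = 0 then 0 else psi (x - 1) N)"
    by (auto simp: psi_K KK_m1 of_nat_diff)
  ultimately show ?thesis by (simp add: psi_K add.commute)
qed

lemma psi_0: "psi x 0 = 1"
  by (simp add: psi_K KK_0)

lemma card_psi: "real (card (paths N x)) = 2^N * psi x N"
proof (induction N arbitrary: x)
  case 0 then show ?case by (simp add: paths_0 psi_0)
next
  case (Suc N)
  have "real (card (paths (Suc N) x)) = (\<Sum>s\<in>paths (Suc N) x. 1)" by simp
  also have "\<dots> = real (card (paths N (Suc x))) + (if x = 0 then 0 else real (card (paths N (x - 1))))"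
    by (subst sum_paths_Suc) simp
  also have "\<dots> = 2^Suc N * psi x (Suc N)"
    using Suc by (simp add: psi_rec field_simps)
  finally show ?case .
qed

lemma sum_paths: "n \<le> N \<Longrightarrow> (\<Sum>s\<in>paths N x. g (s!n)) = 2^N * KK n (int x) (\<lambda>y. psi y (N-n) * g y)"
proof (induction N arbitrary: n x)
  case 0 then show ?case by (simp add: paths_0 KK_0 psi_0)
next
  case (Suc N)
  show ?case
  proof (cases n)
    case 0
    have "(\<Sum>s\<in>paths (Suc N) x. g (s!n)) = (\<Sum>s\<in>paths (Suc N) x. g x)"
      using 0 by (intro sum.cong) (auto simp: paths_def)
    also have "\<dots> = real (card (paths (Suc N) x)) * g x" by simp
    also have "\<dots> = 2^Suc N * KK n (int x) (\<lambda>y. psi y (Suc N - n) * g y)"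
      using 0 by (simp add: card_psi KK_0)
    finally show ?thesis .
  next
    case (Suc n')
    define h where "h = (\<lambda>y. psi y (N - n') * g y)"
    have nn: "n' \<le> N" using Suc Suc.prems by simp
    have "(\<Sum>s\<in>paths (Suc N) x. g (s!n)) =
       (\<Sum>t\<in>paths N (Suc x). g (t!n')) + (if x = 0 then 0 else (\<Sum>t\<in>paths N (x - 1). g (t!n')))"
      using Suc by (subst sum_paths_Suc) simp
    also have "\<dots> = 2^N * KK n' (int x + 1) h + (if x = 0 then 0 else 2^N * KK n' (int x - 1) h)"
      using Suc.IH[OF nn] by (simp add: h_def of_nat_diff add.commute)
    also have "\<dots> = 2^N * (KK n' (int x + 1) h + KK n' (int x - 1) h)"
      by (simp add: KK_m1 distrib_left)
    also have "\<dots> = 2^Suc N * KK n (int x) h"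
      using Suc by (simp add: KK_rec)
    finally show ?thesis using Suc by (simp add: h_def)
  qed
qed



lemma cheb:
  fixes \<mu> f r :: "nat \<Rightarrow> real"
  assumes "finite A" "\<And>i. i \<in> A \<Longrightarrow> \<mu> i \<ge> 0"
    "\<And>i j. i \<in> A \<Longrightarrow> j \<in> A \<Longrightarrow> (f i - f j) * (r i - r j) \<ge> 0"
  shows "(\<Sum>i\<in>A. \<mu> i * f i) * (\<Sum>i\<in>A. \<mu> i * r i) \<le> (\<Sum>i\<in>A. \<mu> i) * (\<Sum>i\<in>A. \<mu> i * f i * r i)"
proof -
  have "0 \<le> (\<Sum>i\<in>A. \<Sum>j\<in>A. \<mu> i * \<mu> j * ((f i - f j) * (r i - r j)))"
  proof (intro sum_nonneg)
    fix i j assume i: "i \<in> A" and j: "j \<in> A"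
    have "0 \<le> \<mu> i * \<mu> j" using assms(2)[OF i] assms(2)[OF j] by simp
    then show "0 \<le> \<mu> i * \<mu> j * ((f i - f j) * (r i - r j))"
      by (rule mult_nonneg_nonneg) (rule assms(3)[OF i j])
  qed
  also have "\<dots> = (\<Sum>i\<in>A. \<Sum>j\<in>A. (\<mu> i * f i * r i) * \<mu> j + \<mu> i * (\<mu> j * f j * r j)
                    - (\<mu> i * f i) * (\<mu> j * r j) - (\<mu> i * r i) * (\<mu> j * f j))"
    by (intro sum.cong refl) (simp add: algebra_simps)
  also have "\<dots> = 2 * ((\<Sum>i\<in>A. \<mu> i) * (\<Sum>i\<in>A. \<mu> i * f i * r i) - (\<Sum>i\<in>A. \<mu> i * f i) * (\<Sum>i\<in>A. \<mu> i * r i))"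
    by (simp only: sum.distrib sum_subtractf sum_product[symmetric]) (simp add: algebra_simps)
  finally show ?thesis by simp
qed

lemma r_mono: "y \<le> z \<Longrightarrow> (real y + 1) / psi y m \<le> (real z + 1) / psi z m"
proof (induction z)
  case 0 then show ?case by simp
next
  case (Suc z)
  show ?case
  proof (cases "y = Suc z")
    case True then show ?thesis by simp
  next
    case False
    then have "(real y + 1) / psi y m \<le> (real z + 1) / psi z m" using Suc by simp
    also have "\<dots> \<le> (real (Suc z) + 1) / psi (Suc z) m"
      using psi_L[of z m] psi_pos[of z m] psi_pos[of "Suc z" m]
      by (simp add: divide_simps algebra_simps)
    finally show ?thesis .
  qed
qed

theorem main:
  fixes x N n :: nat and a :: real
  assumes nN: "n \<le> N" and a: "0 \<le> a"
  shows "(\<Sum>y. meander_p N n x y * exp (a * real y))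
             = measure_pmf.expectation (path_measure N x) (\<lambda>s. exp (a * real (s ! n)))
         \<and> measure_pmf.expectation (path_measure N x) (\<lambda>s. exp (a * real (s ! n)))
             \<le> 4 * exp (a * real x + 2 * a\<^sup>2 * real n)"
proof -
  define m where "m = N - n"
  define e where "e = (\<lambda>y::nat. exp (a * real y))"
  define W where "W = KK n (int x) (\<lambda>y. psi y m * e y)"
  have pp: "psi x N > 0" by (rule psi_pos)
  have E: "measure_pmf.expectation (path_measure N x) (\<lambda>s. exp (a * real (s ! n))) = W / psi x N"
  proof -
    have "measure_pmf.expectation (path_measure N x) (\<lambda>s. exp (a * real (s ! n)))
        = (\<Sum>s\<in>paths N x. e (s!n)) / real (card (paths N x))"
      unfolding path_measure_def e_def by (rule integral_pmf_of_set) (auto simp: finite_paths paths_ne)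
    also have "\<dots> = 2^N * W / (2^N * psi x N)"
      by (simp add: sum_paths[OF nN] card_psi W_def m_def)
    finally show ?thesis by simp
  qed
  have S: "(\<Sum>y. meander_p N n x y * exp (a * real y)) = W / psi x N"
  proof -
    have "(\<Sum>y. meander_p N n x y * exp (a * real y)) = (\<Sum>y\<in>{..<x + n + 1}. meander_p N n x y * exp (a * real y))"
      by (rule suminf_finite) (auto simp: meander_p_def p_half_ph intro!: ph_supp)
    also have "\<dots> = (\<Sum>y<x+n+1. ph n (int x) (int y) * (psi y m * e y)) / psi x N"
      unfolding sum_divide_distrib by (intro sum.cong) (simp_all add: meander_p_def p_half_ph m_def e_def)
    also have "\<dots> = W / psi x N" by (simp add: W_def KK_def)
    finally show ?thesis .
  qed
  define A where "A = {..<x + n + 1}"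
  define \<mu> where "\<mu> = (\<lambda>y. ph n (int x) (int y) * psi y m)"
  define r where "r = (\<lambda>y. (real y + 1) / psi y m)"
  have ch: "(\<Sum>i\<in>A. \<mu> i * e i) * (\<Sum>i\<in>A. \<mu> i * r i) \<le> (\<Sum>i\<in>A. \<mu> i) * (\<Sum>i\<in>A. \<mu> i * e i * r i)"
  proof (rule cheb)
    show "finite A" by (simp add: A_def)
    fix i assume "i \<in> A" show "\<mu> i \<ge> 0"
      unfolding \<mu>_def using ph_nonneg[of "int x" "int i" n] psi_pos[of i m] by simp
  next
    fix i j :: nat
    show "(e i - e j) * (r i - r j) \<ge> 0"
    proof (cases "i \<le> j")
      case True
      then have "e i \<le> e j" "r i \<le> r j" using a r_mono[OF True, of m]
        by (auto simp: e_def r_def mult_left_mono)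
      then show ?thesis by (simp add: mult_nonneg_nonneg mult_nonpos_nonpos)
    next
      case False
      then have "j \<le> i" by simp
      then have "e j \<le> e i" "r j \<le> r i" using a r_mono[OF \<open>j \<le> i\<close>, of m]
        by (auto simp: e_def r_def mult_left_mono)
      then show ?thesis by (simp add: mult_nonneg_nonneg)
    qed
  qed
  have s1: "(\<Sum>i\<in>A. \<mu> i * e i) = W" by (simp add: A_def \<mu>_def W_def KK_def algebra_simps)
  have s2: "(\<Sum>i\<in>A. \<mu> i * r i) = real x + 1"
  proof -
    have "(\<Sum>i\<in>A. \<mu> i * r i) = KK n (int x) (\<lambda>y. real y + 1)"
      unfolding A_def \<mu>_def r_def KK_def using psi_pos
      by (intro sum.cong) (auto simp: field_simps less_imp_neq[symmetric])
    then show ?thesis by (simp add: KK_harm)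
  qed
  have s3: "(\<Sum>i\<in>A. \<mu> i) = psi x N"
  proof -
    have "real (card (paths N x)) = (\<Sum>s\<in>paths N x. 1)" by simp
    also have "\<dots> = 2^N * KK n (int x) (\<lambda>y. psi y m * 1)" using sum_paths[OF nN, where x=x and g="\<lambda>_. 1"] m_def by simp
    finally have "psi x N = KK n (int x) (\<lambda>y. psi y m)" by (simp add: card_psi)
    then show ?thesis by (simp add: A_def \<mu>_def KK_def)
  qed
  have s4: "(\<Sum>i\<in>A. \<mu> i * e i * r i) = KK n (int x) (\<lambda>y. (real y + 1) * exp (a * real y))"
    unfolding A_def \<mu>_def r_def KK_def e_def using psi_pos
    by (intro sum.cong) (auto simp: field_simps less_imp_neq[symmetric])
  have B: "(\<Sum>i\<in>A. \<mu> i * e i * r i) \<le> 4 * (real x + 1) * exp (a * real x) * exp (2 * a^2 * n)"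
    unfolding s4 using Bes_bound[OF a, where x="int x" and n=n] by simp
  define X where "X = 4 * exp (a * real x) * exp (2 * a^2 * n)"
  have "W * (real x + 1) \<le> psi x N * (\<Sum>i\<in>A. \<mu> i * e i * r i)" using ch s1 s2 s3 by simp
  also have "\<dots> \<le> psi x N * (4 * (real x + 1) * exp (a * real x) * exp (2 * a^2 * n))"
    using B pp by (intro mult_left_mono) auto
  also have "\<dots> = (real x + 1) * (psi x N * X)" by (simp add: X_def ac_simps)
  finally have "(real x + 1) * W \<le> (real x + 1) * (psi x N * X)" by (simp add: mult.commute)
  then have "W \<le> psi x N * X" by (rule mult_left_le_imp_le) simp
  then have "W / psi x N \<le> X" using pp by (simp add: pos_divide_le_eq mult.commute)
  also have "X = 4 * exp (a * real x + 2 * a\<^sup>2 * real n)" by (simp add: X_def exp_add)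
  finally have "W / psi x N \<le> 4 * exp (a * real x + 2 * a\<^sup>2 * real n)" .
  then show ?thesis using E S by simp
qed

theorem proposition3p7:
  shows "\<exists>C>0. \<exists>K>0. \<forall>(x::nat) (N::nat) (n::nat) (a::real). n \<le> N \<longrightarrow> 0 \<le> a \<longrightarrow>
           (\<Sum>y. meander_p N n x y * exp (a * real y))
             = measure_pmf.expectation (path_measure N x) (\<lambda>s. exp (a * real (s ! n)))
         \<and> measure_pmf.expectation (path_measure N x) (\<lambda>s. exp (a * real (s ! n)))
             \<le> C * exp (a * real x + K * a\<^sup>2 * real n)"
  by (rule exI[of _ 4], simp, rule exI[of _ 2], simp) (use main in blast)


end
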